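(* Let $M$ be a matroid of rank $n$ on $[d]$. Then, as subsets of $\mathbb{C}^{nd}$, \[ V_{\mathcal{C}(M)} \;=\; V_M \;\cup \bigcup_{N\in \min(M)} V_{\mathcal{C}(N)} . \]
   Context: A matroid $N$ on $[d]=\{1,\dots,d\}$ is determined by its family $\mathcal{D}(N)$ of dependent sets; $\mathcal{C}(N)$ denotes its circuits (minimal dependent sets). Dependency order: for matroids $N_1,N_2$ on $[d]$, $N_1\le N_2$ iff $\mathcal{D}(N_1)\subseteq\mathcal{D}(N_2)$, and $N_1<N_2$ iff moreover $N_1\ne N_2$. For a matroid $M$ on $[d]$, $\min(M)$ denotes the set of minimal elements (for the dependency order) of the set of all matroids $N$ on $[d]$ with $N>M$ (every such $N$ has rank at most $n$). For a matroid $N$ on $[d]$ of rank at most $n$: a realization of $N$ is a tuple $\gamma=(\gamma_1,\dots,\gamma_d)\in(\mathbb{C}^n)^d\cong\mathbb{C}^{nd}$ such that for every $S\subseteq[d]$ the family $(\gamma_s)_{s\in S}$ is linearly dependent iff $S\in\mathcal{D}(N)$; $\Gamma_N$ is the set of realizations and the matroid variety $V_N$ is the Zariski closure of $\Gamma_N$ in $\mathbb{C}^{nd}$. The circuit variety $V_{\mathcal{C}(N)}$ is the set of all $\gamma\in(\mathbb{C}^n)^d$ such that $(\gamma_s)_{s\in S}$ is linearly dependent for every $S\in\mathcal{D}(N)$. *)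

theory Defs
  imports "HOL-Analysis.Analysis"
begin

text \<open>A matroid on [d] = {1..d} is represented by its family of dependent sets.
  The family D is a matroid iff its complement in Pow [d] (the independent sets)
  satisfies the usual independence axioms.\<close>

definition ground :: "nat \<Rightarrow> nat set" where
  "ground d = {1..d}"

definition indep_sets :: "nat \<Rightarrow> nat set set \<Rightarrow> nat set set" where
  "indep_sets d D = Pow (ground d) - D"

definition is_matroid :: "nat \<Rightarrow> nat set set \<Rightarrow> bool" where
  "is_matroid d D \<longleftrightarrow>
     D \<subseteq> Pow (ground d) \<and>
     {} \<in> indep_sets d D \<and>
     (\<forall>I J. I \<in> indep_sets d D \<longrightarrow> J \<subseteq> I \<longrightarrow> J \<in> indep_sets d D) \<and>
     (\<forall>I J. I \<in> indep_sets d D \<longrightarrow> J \<in> indep_sets d D \<longrightarrow> card I < card J \<longrightarrow>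
        (\<exists>x\<in>J - I. insert x I \<in> indep_sets d D))"

definition matroid_rank :: "nat \<Rightarrow> nat set set \<Rightarrow> nat" where
  "matroid_rank d D = Max (card ` indep_sets d D)"

definition circuits :: "nat set set \<Rightarrow> nat set set" where
  "circuits D = {C \<in> D. \<forall>C' \<in> D. C' \<subseteq> C \<longrightarrow> C' = C}"

definition min_above :: "nat \<Rightarrow> nat set set \<Rightarrow> nat set set set" where
  "min_above d M =
     {N. is_matroid d N \<and> M \<subset> N \<and>
         \<not> (\<exists>N'. is_matroid d N' \<and> M \<subset> N' \<and> N' \<subset> N)}"

text \<open>Ambient space (C^n)^d \<cong> C^{nd}: tuples indexed by [d], vectors in complex^'n,
  with the (irrelevant) entries outside [d] fixed to 0.\<close>
definition ambient :: "nat \<Rightarrow> (nat \<Rightarrow> complex^'n) set" where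
  "ambient d = {\<gamma>. \<forall>s. s \<notin> ground d \<longrightarrow> \<gamma> s = 0}"

definition lin_dep_family :: "(nat \<Rightarrow> complex^'n) \<Rightarrow> nat set \<Rightarrow> bool" where
  "lin_dep_family \<gamma> S \<longleftrightarrow>
     (\<exists>c :: nat \<Rightarrow> complex. (\<exists>s\<in>S. c s \<noteq> 0) \<and> (\<Sum>s\<in>S. c s *s \<gamma> s) = 0)"

inductive_set poly_funs :: "nat \<Rightarrow> ((nat \<Rightarrow> complex^'n) \<Rightarrow> complex) set" for d where
  pconst: "(\<lambda>_. c) \<in> poly_funs d"
| pcoord: "s \<in> ground d \<Longrightarrow> (\<lambda>\<gamma>. \<gamma> s $ i) \<in> poly_funs d"
| padd: "p \<in> poly_funs d \<Longrightarrow> q \<in> poly_funs d \<Longrightarrow> (\<lambda>\<gamma>. p \<gamma> + q \<gamma>) \<in> poly_funs d"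
| pmult: "p \<in> poly_funs d \<Longrightarrow> q \<in> poly_funs d \<Longrightarrow> (\<lambda>\<gamma>. p \<gamma> * q \<gamma>) \<in> poly_funs d"

definition zariski_closure :: "nat \<Rightarrow> (nat \<Rightarrow> complex^'n) set \<Rightarrow> (nat \<Rightarrow> complex^'n) set" where
  "zariski_closure d S =
     {x \<in> ambient d. \<forall>p \<in> poly_funs d. (\<forall>y\<in>S. p y = 0) \<longrightarrow> p x = 0}"

definition realizations :: "nat \<Rightarrow> nat set set \<Rightarrow> (nat \<Rightarrow> complex^'n) set" where
  "realizations d N =
     {\<gamma> \<in> ambient d. \<forall>S \<subseteq> ground d. lin_dep_family \<gamma> S \<longleftrightarrow> S \<in> N}"

definition matroid_variety :: "nat \<Rightarrow> nat set set \<Rightarrow> (nat \<Rightarrow> complex^'n) set" where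
  "matroid_variety d N = zariski_closure d (realizations d N)"

text \<open>Circuit variety V_{C(N)}: all S \<in> D(N) dependent (as in the paper's definition).\<close>
definition circuit_variety :: "nat \<Rightarrow> nat set set \<Rightarrow> (nat \<Rightarrow> complex^'n) set" where
  "circuit_variety d N = {\<gamma> \<in> ambient d. \<forall>S \<in> N. lin_dep_family \<gamma> S}"

end

theory Submission
  imports Defs
begin


lemma det_nz_cols:
  fixes A :: "'a::field^'n^'n"
  shows "det A \<noteq> 0 \<longleftrightarrow> (\<forall>c. (\<Sum>i\<in>UNIV. c i *s column i A) = 0 \<longrightarrow> (\<forall>i. c i = 0))"
  by (simp add: invertible_det_nz[symmetric] invertible_left_inverse matrix_left_invertible_independent_columns)

lemma poly_sum: "finite A \<Longrightarrow> (\<And>a. a \<in> A \<Longrightarrow> f a \<in> poly_funs d) \<Longrightarrow> (\<lambda>\<gamma>. \<Sum>a\<in>A. f a \<gamma>) \<in> poly_funs d"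
proof (induction A rule: finite_induct)
  case empty then show ?case using poly_funs.pconst[of 0 d] by simp
next
  case (insert x F)
  then show ?case using poly_funs.padd[of "f x" d "\<lambda>\<gamma>. \<Sum>a\<in>F. f a \<gamma>"] by simp
qed

lemma poly_prod: "finite A \<Longrightarrow> (\<And>a. a \<in> A \<Longrightarrow> f a \<in> poly_funs d) \<Longrightarrow> (\<lambda>\<gamma>. \<Prod>a\<in>A. f a \<gamma>) \<in> poly_funs d"
proof (induction A rule: finite_induct)
  case empty then show ?case using poly_funs.pconst[of 1 d] by simp
next
  case (insert x F)
  then show ?case using poly_funs.pmult[of "f x" d "\<lambda>\<gamma>. \<Prod>a\<in>F. f a \<gamma>"] by simp
qed

lemma poly_det:
  fixes F :: "(nat \<Rightarrow> complex^'n) \<Rightarrow> complex^'m^'m"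
  assumes "\<And>r i. (\<lambda>\<gamma>. F \<gamma> $ r $ i) \<in> poly_funs d"
  shows "(\<lambda>\<gamma>. det (F \<gamma>)) \<in> poly_funs d"
  unfolding det_def
  apply (rule poly_sum[where f="\<lambda>p \<gamma>. of_int (sign p) * (\<Prod>i\<in>UNIV. F \<gamma> $ i $ p i)", simplified])
   apply simp
  apply (rule poly_funs.pmult[OF poly_funs.pconst])
  apply (rule poly_prod[where f="\<lambda>i \<gamma>. F \<gamma> $ i $ p i" for p, simplified])
  using assms by auto


lemma not_dep_inj:
  fixes \<gamma> :: "nat \<Rightarrow> complex^'n"
  assumes "finite S" "\<not> lin_dep_family \<gamma> S"
  shows "inj_on \<gamma> S"
  proof (rule inj_onI, rule ccontr)
    fix s t assume st: "s \<in> S" "t \<in> S" "\<gamma> s = \<gamma> t" "s \<noteq> t"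
    define c where "c = (\<lambda>u. if u = s then 1 else if u = t then -1 else (0::complex))"
    have "(\<Sum>u\<in>S. c u *s \<gamma> u) = (\<Sum>u\<in>{s,t}. c u *s \<gamma> u)"
      apply (rule sum.mono_neutral_right)
      using assms(1) apply simp
      using st apply simp
      by (simp add: c_def)
    also have "\<dots> = 0" using st by (simp add: c_def)
    finally have z: "(\<Sum>u\<in>S. c u *s \<gamma> u) = 0" .
    have "lin_dep_family \<gamma> S" unfolding lin_dep_family_def
        apply (rule exI[of _ c]) apply (rule conjI)
        apply (rule bexI[of _ s]) apply (simp add: c_def)
        using st apply simp
        using z by simp
    with assms show False by simp
  qed

lemma not_dep_indep:
  fixes \<gamma> :: "nat \<Rightarrow> complex^'n"
  assumes "finite S" "\<not> lin_dep_family \<gamma> S"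
  shows "vec.independent (\<gamma> ` S)"
proof -
  have inj: "inj_on \<gamma> S" using not_dep_inj assms .
  show ?thesis
    unfolding vec.independent_explicit
  proof (intro conjI allI impI ballI)
    show "finite (\<gamma> ` S)" using assms by simp
    fix c v assume h: "(\<Sum>v\<in>\<gamma> ` S. c v *s v) = 0" and v: "v \<in> \<gamma> ` S"
    have z: "(\<Sum>u\<in>S. (c \<circ> \<gamma>) u *s \<gamma> u) = 0" using h sum.reindex[OF inj, of "\<lambda>v. c v *s v"] by simp
    have "\<forall>s\<in>S. (c \<circ> \<gamma>) s = 0"
    proof (rule ccontr)
      assume a: "\<not> (\<forall>s\<in>S. (c \<circ> \<gamma>) s = 0)"
      have "lin_dep_family \<gamma> S" unfolding lin_dep_family_def
        apply (rule exI[of _ "c \<circ> \<gamma>"]) apply (rule conjI)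
        using a apply simp
        using z by simp
      with assms(2) show False by simp
    qed
    then show "c v = 0" using v by auto
  qed
qed

lemma finite_ground: "finite (ground d)" by (simp add: ground_def)

lemma dep_poly:
  fixes x :: "nat \<Rightarrow> complex^'n"
  assumes S: "S \<subseteq> ground d" and nd: "\<not> lin_dep_family x S"
  shows "\<exists>p\<in>poly_funs d. (\<forall>\<gamma>::nat\<Rightarrow>complex^'n. lin_dep_family \<gamma> S \<longrightarrow> p \<gamma> = 0) \<and> p x \<noteq> 0"
proof -
  have finS: "finite S" using S finite_ground finite_subset by blast
  have inj: "inj_on x S" using not_dep_inj[OF finS nd] .
  have ind: "vec.independent (x ` S)" using not_dep_indep[OF finS nd] .
  obtain B where B: "x ` S \<subseteq> B" "vec.independent B" "UNIV \<subseteq> vec.span B"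
    using vec.maximal_independent_subset_extend[of "x ` S" UNIV] ind by auto
  have cardB: "card B = CARD('n)"
    using vec.basis_card_eq_dim[of B UNIV] B vec_dim_card by auto
  have finB: "finite B" using vec.finiteI_independent B(2) .
  define E where "E = B - x ` S"
  define T where "T = (Inl ` S \<union> Inr ` E :: (nat + complex^'n) set)"
  have finT: "finite T" unfolding T_def E_def using finS finB by simp
  have "card T = card (Inl ` S :: (nat + complex^'n) set) + card (Inr ` E :: (nat + complex^'n) set)"
    unfolding T_def by (rule card_Un_disjoint) (use finS finB E_def in auto)
  also have "\<dots> = card S + card E" by (simp add: card_image)
  also have "card E = card B - card (x ` S)" unfolding E_def
    using B(1) finB by (simp add: card_Diff_subset finite_subset)
  also have "card (x ` S) = card S" using card_image[OF inj] .
  finally have "card T = CARD('n)" using cardB card_mono[OF finB B(1)] card_image[OF inj] by simp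
  then obtain \<sigma> where \<sigma>: "bij_betw \<sigma> (UNIV::'n set) T"
    using finite_same_card_bij[of "UNIV::'n set" T] finT by auto
  define col where "col = (\<lambda>(\<gamma>::nat\<Rightarrow>complex^'n) i. case \<sigma> i of Inl s \<Rightarrow> \<gamma> s | Inr v \<Rightarrow> v)"
  define A where "A = (\<lambda>\<gamma>. (\<chi> r i. col \<gamma> i $ r) :: complex^'n^'n)"
  have colA: "column i (A \<gamma>) = col \<gamma> i" for \<gamma> i
    by (simp add: column_def A_def vec_eq_iff)
  have \<sigma>T: "\<sigma> i \<in> T" for i using \<sigma> by (auto simp: bij_betw_def)
  have "(\<lambda>\<gamma>. det (A \<gamma>)) \<in> poly_funs d"
  proof (rule poly_det)
    fix r i
    show "(\<lambda>\<gamma>. A \<gamma> $ r $ i) \<in> poly_funs d"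
    proof (cases "\<sigma> i")
      case (Inl s)
      then have "s \<in> S" using \<sigma>T[of i] by (auto simp: T_def)
      then show ?thesis using Inl S poly_funs.pcoord[of s d r] by (auto simp: A_def col_def)
    next
      case (Inr v)
      then show ?thesis using poly_funs.pconst[of "v $ r" d] by (simp add: A_def col_def)
    qed
  qed
  moreover have "det (A \<gamma>) = 0" if dep: "lin_dep_family \<gamma> S" for \<gamma>
  proof -
    obtain c s0 where c: "s0 \<in> S" "c s0 \<noteq> 0" "(\<Sum>s\<in>S. c s *s \<gamma> s) = 0"
      using dep unfolding lin_dep_family_def by blast
    define w where "w = (\<lambda>i. case \<sigma> i of Inl s \<Rightarrow> c s | Inr (_::complex^'n) \<Rightarrow> 0)"
    define g where "g = (\<lambda>t. case t of Inl s \<Rightarrow> c s *s \<gamma> s | Inr (_::complex^'n) \<Rightarrow> (0::complex^'n))"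
    have "(\<Sum>i\<in>UNIV. w i *s column i (A \<gamma>)) = (\<Sum>i\<in>UNIV. g (\<sigma> i))"
      by (rule sum.cong) (auto simp: colA w_def g_def col_def split: sum.split)
    also have "\<dots> = sum g T" using sum.reindex_bij_betw[OF \<sigma>] .
    also have "\<dots> = sum g (Inl ` S) + sum g (Inr ` E)"
      unfolding T_def by (rule sum.union_disjoint) (use finS finB E_def in auto)
    also have "sum g (Inr ` E) = 0" by (simp add: g_def sum.reindex)
    also have "sum g (Inl ` S) = (\<Sum>s\<in>S. c s *s \<gamma> s)" by (simp add: g_def sum.reindex)
    finally have z: "(\<Sum>i\<in>UNIV. w i *s column i (A \<gamma>)) = 0" using c(3) by simp
    define i0 where "i0 = inv_into UNIV \<sigma> (Inl s0)"
    have "\<sigma> i0 = Inl s0" unfolding i0_def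
      using bij_betw_inv_into_right[OF \<sigma>, of "Inl s0"] c(1) by (simp add: T_def)
    then have "w i0 \<noteq> 0" using c(2) by (simp add: w_def)
    then show ?thesis using z det_nz_cols[of "A \<gamma>"] by blast
  qed
  moreover have "det (A x) \<noteq> 0"
    unfolding det_nz_cols colA
  proof (intro allI impI)
    fix c i assume h: "(\<Sum>i\<in>UNIV. c i *s col x i) = 0"
    have colB: "col x j \<in> B" for j
      using \<sigma>T[of j] B(1) by (auto simp: T_def E_def col_def)
    have injc: "inj (col x)"
    proof (rule injI)
      fix a b assume ab: "col x a = col x b"
      have "\<sigma> a = \<sigma> b"
        using \<sigma>T[of a] \<sigma>T[of b] ab inj
        by (auto simp: T_def E_def col_def inj_on_def split: sum.splits)
      then show "a = b" using \<sigma> by (auto simp: bij_betw_def inj_def)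
    qed
    have indc: "vec.independent (range (col x))"
      by (rule vec.independent_mono[OF B(2)]) (use colB in auto)
    define e where "e = (\<lambda>b. c (inv (col x) b))"
    have "(\<Sum>b\<in>range (col x). e b *s b) = (\<Sum>j\<in>UNIV. e (col x j) *s col x j)"
      using sum.reindex[OF injc, of "\<lambda>b. e b *s b"] by simp
    also have "\<dots> = 0" using h by (simp add: e_def inv_f_f[OF injc])
    finally have "(\<Sum>b\<in>range (col x). e b *s b) = 0" .
    moreover have "\<forall>c. (\<Sum>b\<in>range (col x). c b *s b) = 0 \<longrightarrow> (\<forall>b\<in>range (col x). c b = 0)"
      using indc unfolding vec.independent_explicit by (rule conjunct2)
    ultimately have "e (col x i) = 0" by simp
    then show "c i = 0" by (simp add: e_def inv_f_f[OF injc])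
  qed
  ultimately show ?thesis by (intro bexI[of _ "\<lambda>\<gamma>. det (A \<gamma>)"] conjI allI impI) auto
qed



lemma dep_mono:
  fixes \<gamma> :: "nat \<Rightarrow> complex^'n"
  assumes "J \<subseteq> I" "finite I" "lin_dep_family \<gamma> J"
  shows "lin_dep_family \<gamma> I"
proof -
  obtain c s0 where c: "s0 \<in> J" "c s0 \<noteq> 0" "(\<Sum>s\<in>J. c s *s \<gamma> s) = 0"
    using assms(3) unfolding lin_dep_family_def by blast
  define c' where "c' = (\<lambda>u. if u \<in> J then c u else 0)"
  have "(\<Sum>s\<in>I. c' s *s \<gamma> s) = (\<Sum>s\<in>J. c' s *s \<gamma> s)"
    apply (rule sum.mono_neutral_right)
    using assms(2) apply simp
    using assms(1) apply simp
    by (simp add: c'_def)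
  also have "\<dots> = 0" using c(3) by (simp add: c'_def)
  finally have z: "(\<Sum>s\<in>I. c' s *s \<gamma> s) = 0" .
  show ?thesis unfolding lin_dep_family_def
    apply (rule exI[of _ c']) apply (rule conjI)
     apply (rule bexI[of _ s0]) using c(1,2) apply (simp add: c'_def)
    using c(1) assms(1) apply blast
    using z by simp
qed

lemma dep_insert_span:
  fixes \<gamma> :: "nat \<Rightarrow> complex^'n"
  assumes "finite I" "x \<notin> I" "\<not> lin_dep_family \<gamma> I" "lin_dep_family \<gamma> (insert x I)"
  shows "\<gamma> x \<in> vec.span (\<gamma> ` I)"
proof -
  obtain c s0 where c: "s0 \<in> insert x I" "c s0 \<noteq> 0" "(\<Sum>s\<in>insert x I. c s *s \<gamma> s) = 0"
    using assms(4) unfolding lin_dep_family_def by blast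
  have z: "c x *s \<gamma> x + (\<Sum>s\<in>I. c s *s \<gamma> s) = 0"
    using c(3) assms(1,2) by simp
  have cx: "c x \<noteq> 0"
  proof
    assume cx0: "c x = 0"
    then have z2: "(\<Sum>s\<in>I. c s *s \<gamma> s) = 0" using z by simp
    have "s0 \<in> I" using c(1,2) cx0 by auto
    then have "lin_dep_family \<gamma> I" unfolding lin_dep_family_def
      apply (intro exI[of _ c] conjI)
       apply (rule bexI[of _ s0]) using c(2) apply simp apply simp
      using z2 by simp
    with assms(3) show False by simp
  qed
  have "\<gamma> x = (- inverse (c x)) *s (\<Sum>s\<in>I. c s *s \<gamma> s)"
  proof -
    have "(\<Sum>s\<in>I. c s *s \<gamma> s) = - (c x *s \<gamma> x)" using z by (simp add: eq_neg_iff_add_eq_0 add.commute)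
    then show ?thesis using cx by (simp add: vec_eq_iff)
  qed
  also have "\<dots> \<in> vec.span (\<gamma> ` I)"
    by (intro vec.span_scale vec.span_sum vec.span_base) auto
  finally show ?thesis .
qed

lemma realizable_matroid:
  fixes \<gamma> :: "nat \<Rightarrow> complex^'n"
  shows "is_matroid d {S. S \<subseteq> ground d \<and> lin_dep_family \<gamma> S}" (is "is_matroid d ?N")
  unfolding is_matroid_def indep_sets_def
proof (intro conjI allI impI)
  show "?N \<subseteq> Pow (ground d)" by auto
  show "{} \<in> Pow (ground d) - ?N" by (simp add: lin_dep_family_def)
  fix I J
  assume I: "I \<in> Pow (ground d) - ?N"
  {
    assume J: "J \<subseteq> I"
    have finI: "finite I" using I finite_ground finite_subset by auto
    show "J \<in> Pow (ground d) - ?N"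
      using I J dep_mono[OF J finI, of \<gamma>] by auto
  }
  assume J: "J \<in> Pow (ground d) - ?N" and lt: "card I < card J"
  have finI: "finite I" using I finite_ground finite_subset by auto
  have finJ: "finite J" using J finite_ground finite_subset by auto
  have ndI: "\<not> lin_dep_family \<gamma> I" using I by auto
  have ndJ: "\<not> lin_dep_family \<gamma> J" using J by auto
  show "\<exists>x\<in>J - I. insert x I \<in> Pow (ground d) - ?N"
  proof (rule ccontr)
    assume "\<not> ?thesis"
    then have all: "\<And>x. x \<in> J - I \<Longrightarrow> lin_dep_family \<gamma> (insert x I)"
      using I J by auto
    have sp: "\<gamma> ` J \<subseteq> vec.span (\<gamma> ` I)"
    proof
      fix v assume "v \<in> \<gamma> ` J"
      then obtain x where x: "x \<in> J" "v = \<gamma> x" by auto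
      show "v \<in> vec.span (\<gamma> ` I)"
      proof (cases "x \<in> I")
        case True then show ?thesis using x by (simp add: vec.span_base)
      next
        case False then show ?thesis using x dep_insert_span[OF finI False ndI all] by simp
      qed
    qed
    have "card (\<gamma> ` J) \<le> card (\<gamma> ` I)"
      using vec.independent_span_bound[OF _ not_dep_indep[OF finJ ndJ] sp] finI by simp
    then show False using lt card_image[OF not_dep_inj[OF finI ndI]] card_image[OF not_dep_inj[OF finJ ndJ]] by simp
  qed
qed



theorem mainTheorem1:
  fixes d :: nat and M :: "nat set set"
  assumes "is_matroid d M"
    and "matroid_rank d M = CARD('n::finite)"
  shows "(circuit_variety d M :: (nat \<Rightarrow> complex^'n) set) =
         matroid_variety d M \<union> (\<Union>N \<in> min_above d M. circuit_variety d N)"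
proof
  have Mg: "M \<subseteq> Pow (ground d)" using assms(1) unfolding is_matroid_def by blast
  show "(circuit_variety d M :: (nat \<Rightarrow> complex^'n) set) \<subseteq>
         matroid_variety d M \<union> (\<Union>N \<in> min_above d M. circuit_variety d N)"
  proof
    fix \<gamma> :: "nat \<Rightarrow> complex^'n"
    assume g: "\<gamma> \<in> circuit_variety d M"
    then have amb: "\<gamma> \<in> ambient d" by (simp add: circuit_variety_def)
    define N where "N = {S. S \<subseteq> ground d \<and> lin_dep_family \<gamma> S}"
    have MN: "M \<subseteq> N" using g Mg by (auto simp: N_def circuit_variety_def)
    have matN: "is_matroid d N" unfolding N_def by (rule realizable_matroid)
    show "\<gamma> \<in> matroid_variety d M \<union> (\<Union>N \<in> min_above d M. circuit_variety d N)"
    proof (cases "N = M")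
      case True
      have "\<gamma> \<in> realizations d M"
        unfolding realizations_def using amb True by (auto simp: N_def)
      then have "\<gamma> \<in> matroid_variety d M"
        unfolding matroid_variety_def zariski_closure_def using amb by auto
      then show ?thesis by simp
    next
      case False
      define P where "P = (\<lambda>N'. is_matroid d N' \<and> M \<subset> N' \<and> N' \<subseteq> N)"
      have "P N" using False MN matN by (auto simp: P_def)
      then obtain N' where N': "P N'" and least: "\<And>y. P y \<Longrightarrow> card N' \<le> card y"
        using ex_has_least_nat[of P N card] by blast
      have finN: "finite N" unfolding N_def
        by (rule finite_subset[of _ "Pow (ground d)"]) (auto simp: finite_ground)
      have "N' \<in> min_above d M"
        unfolding min_above_def
      proof (intro CollectI conjI notI)
        show "is_matroid d N'" "M \<subset> N'" using N' by (auto simp: P_def)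
        assume "\<exists>N''. is_matroid d N'' \<and> M \<subset> N'' \<and> N'' \<subset> N'"
        then obtain N'' where N'': "is_matroid d N''" "M \<subset> N''" "N'' \<subset> N'" by blast
        have "P N''" using N'' N' by (auto simp: P_def)
        then have "card N' \<le> card N''" by (rule least)
        moreover have "finite N'" using N' finN by (auto simp: P_def intro: finite_subset)
        then have "card N'' < card N'" using N''(3) psubset_card_mono by blast
        ultimately show False by simp
      qed
      moreover have "\<gamma> \<in> circuit_variety d N'"
        using N' amb by (auto simp: P_def N_def circuit_variety_def)
      ultimately show ?thesis by blast
    qed
  qed
  show "matroid_variety d M \<union> (\<Union>N \<in> min_above d M. circuit_variety d N) \<subseteq>
        (circuit_variety d M :: (nat \<Rightarrow> complex^'n) set)"
  proof (intro Un_least UN_least)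
    show "(matroid_variety d M :: (nat \<Rightarrow> complex^'n) set) \<subseteq> circuit_variety d M"
    proof
      fix x :: "nat \<Rightarrow> complex^'n"
      assume x: "x \<in> matroid_variety d M"
      have amb: "x \<in> ambient d" using x by (simp add: matroid_variety_def zariski_closure_def)
      have cl: "\<And>p. p \<in> poly_funs d \<Longrightarrow> (\<forall>y\<in>realizations d M. p y = 0) \<Longrightarrow> p x = 0"
        using x by (simp add: matroid_variety_def zariski_closure_def)
      have "lin_dep_family x S" if S: "S \<in> M" for S
      proof (rule ccontr)
        assume nd: "\<not> lin_dep_family x S"
        have Sg: "S \<subseteq> ground d" using S Mg by auto
        obtain p where p: "p \<in> poly_funs d" "\<forall>\<gamma>::nat\<Rightarrow>complex^'n. lin_dep_family \<gamma> S \<longrightarrow> p \<gamma> = 0" "p x \<noteq> 0"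
          using dep_poly[OF Sg nd] by blast
        have "\<forall>y\<in>realizations d M. p y = 0"
          using p(2) Sg S by (auto simp: realizations_def)
        then have "p x = 0" using cl p(1) by blast
        with p(3) show False by simp
      qed
      then show "x \<in> circuit_variety d M" using amb by (simp add: circuit_variety_def)
    qed
    fix N assume "N \<in> min_above d M"
    then have "M \<subseteq> N" by (auto simp: min_above_def)
    then show "(circuit_variety d N :: (nat \<Rightarrow> complex^'n) set) \<subseteq> circuit_variety d M"
      by (auto simp: circuit_variety_def)
  qed
qed

end
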